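(* Let $p \geq 2$ and $n_1,\dots,n_p \geq 1$. Then the complete partite graph $K_{n_1+n_2, n_3, \ldots, n_p}$ is a minor of $K_{n_1,n_2,\ldots,n_p}$. Similarly, for every $k \geq 0$, every graph obtained from $K_{n_1,n_2,\ldots,n_p}$ by removing $k$ edges has as a minor a graph obtained from $K_{n_1+n_2,n_3,\ldots,n_p}$ by removing $k$ edges.
   Context: $K_{n_1,\ldots,n_p}$ denotes the complete $p$-partite graph with $n_i$ vertices in the $i$-th part (vertices are adjacent iff they lie in different parts). A graph $H$ is a minor of $G$ if $H$ is obtained from $G$ by a finite sequence of edge contractions, vertex deletions and edge deletions. *)

theory Defs
  imports Main
begin

text \<open>A (finite simple) graph: a vertex set and a set of edges, each edge a 2-element set of vertices.\<close>
type_synonym 'a graph = "'a set \<times> 'a set set"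

definition verts :: "'a graph \<Rightarrow> 'a set" where "verts G = fst G"
definition edges :: "'a graph \<Rightarrow> 'a set set" where "edges G = snd G"

definition delete_vertex :: "'a \<Rightarrow> 'a graph \<Rightarrow> 'a graph" where
  "delete_vertex v G = (verts G - {v}, {e \<in> edges G. v \<notin> e})"

definition delete_edge :: "'a set \<Rightarrow> 'a graph \<Rightarrow> 'a graph" where
  "delete_edge e G = (verts G, edges G - {e})"

text \<open>Contract the edge {u,v}: v is merged into u, loops and parallel edges vanish.\<close>
definition contract_edge :: "'a \<Rightarrow> 'a \<Rightarrow> 'a graph \<Rightarrow> 'a graph" where
  "contract_edge u v G = (verts G - {v},
     {(\<lambda>x. if x = v then u else x) ` e | e. e \<in> edges G \<and> e \<noteq> {u, v}})"

inductive minor_step :: "'a graph \<Rightarrow> 'a graph \<Rightarrow> bool" where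
  del_v: "v \<in> verts G \<Longrightarrow> minor_step G (delete_vertex v G)"
| del_e: "e \<in> edges G \<Longrightarrow> minor_step G (delete_edge e G)"
| contr: "{u, v} \<in> edges G \<Longrightarrow> u \<noteq> v \<Longrightarrow> minor_step G (contract_edge u v G)"

definition graph_iso :: "'a graph \<Rightarrow> 'b graph \<Rightarrow> bool" where
  "graph_iso G H \<longleftrightarrow> (\<exists>f. bij_betw f (verts G) (verts H) \<and> edges H = (\<lambda>e. f ` e) ` edges G)"

definition is_minor :: "'b graph \<Rightarrow> 'a graph \<Rightarrow> bool" where
  "is_minor H G \<longleftrightarrow> (\<exists>G'. minor_step\<^sup>*\<^sup>* G G' \<and> graph_iso G' H)"

text \<open>Complete multipartite graph K_{n_1,...,n_p} for ns = [n_1,...,n_p]: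
  vertex (i,j) is the j-th vertex of the i-th part.\<close>
definition cpg_verts :: "nat list \<Rightarrow> (nat \<times> nat) set" where
  "cpg_verts ns = {(i, j). i < length ns \<and> j < ns ! i}"

definition complete_partite :: "nat list \<Rightarrow> (nat \<times> nat) graph" where
  "complete_partite ns = (cpg_verts ns,
     {{x, y} | x y. x \<in> cpg_verts ns \<and> y \<in> cpg_verts ns \<and> fst x \<noteq> fst y})"

definition remove_edges :: "'a graph \<Rightarrow> 'a set set \<Rightarrow> 'a graph" where
  "remove_edges G F = (verts G, edges G - F)"

end

theory Submission
  imports Defs
begin

lemma del_edges:
  assumes "finite D"
  shows "minor_step\<^sup>*\<^sup>* (V, E) (V, E - D)"
  using assms
proof (induction D rule: finite_induct)
  case empty then show ?case by simp
next
  case (insert e D)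
  show ?case
  proof (cases "e \<in> E - D")
    case True
    have "minor_step (V, E - D) (delete_edge e (V, E - D))"
      by (rule minor_step.del_e) (use True in \<open>simp add: edges_def\<close>)
    moreover have "delete_edge e (V, E - D) = (V, E - insert e D)"
      by (auto simp: delete_edge_def verts_def edges_def)
    ultimately show ?thesis using insert.IH
      by (metis rtranclp.rtrancl_into_rtrancl)
  next
    case False
    then have "E - insert e D = E - D" by auto
    then show ?thesis using insert.IH by simp
  qed
qed

lemma iso_image:
  assumes "bij_betw f V W"
  shows "graph_iso (V, E) (W, (\<lambda>e. f ` e) ` E)"
  using assms unfolding graph_iso_def verts_def edges_def by auto

lemma finite_cpg: "finite (cpg_verts ns)"
proof -
  have "cpg_verts ns = Sigma {..<length ns} (\<lambda>i. {..<ns!i})"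
    by (auto simp: cpg_verts_def)
  then show ?thesis by simp
qed

lemma finite_edges_cp: "finite (edges (complete_partite ns))"
proof -
  have "edges (complete_partite ns) \<subseteq> Pow (cpg_verts ns)"
    by (auto simp: complete_partite_def edges_def)
  then show ?thesis using finite_cpg by (meson finite_Pow_iff finite_subset)
qed

lemma extend_subset:
  assumes "finite S" "A \<subseteq> S" "card A \<le> m" "m \<le> card S"
  shows "\<exists>T. A \<subseteq> T \<and> T \<subseteq> S \<and> card T = m"
proof -
  have "card (S - A) = card S - card A"
    using assms by (meson card_Diff_subset finite_subset)
  then obtain R where R: "R \<subseteq> S - A" "card R = m - card A"
    using assms by (metis diff_le_mono obtain_subset_with_card_n)
  have fA: "finite A" using assms finite_subset by blast
  have fR: "finite R" using R assms by (meson finite_Diff finite_subset)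
  have "card (A \<union> R) = card A + card R"
    using R fA fR by (subst card_Un_disjoint) auto
  then show ?thesis using R assms by (intro exI[of _ "A \<union> R"]) auto
qed

lemma cpg_mem: "(i, j) \<in> cpg_verts ns \<longleftrightarrow> i < length ns \<and> j < ns ! i"
  by (simp add: cpg_verts_def)

definition ff :: "nat \<Rightarrow> nat \<times> nat \<Rightarrow> nat \<times> nat" where
  "ff n1 x = (if fst x = 0 then x else if fst x = 1 then (0, n1 + snd x) else (fst x - 1, snd x))"

definition gg :: "nat \<Rightarrow> nat \<times> nat \<Rightarrow> nat \<times> nat" where
  "gg n1 y = (if fst y = 0 then (if snd y < n1 then y else (1, snd y - n1)) else (fst y + 1, snd y))"

lemma ff_in: "x \<in> cpg_verts (n1 # n2 # rest) \<Longrightarrow> ff n1 x \<in> cpg_verts ((n1 + n2) # rest)"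
  by (cases x) (auto simp: cpg_verts_def ff_def nth_Cons split: nat.splits)

lemma gg_in: "y \<in> cpg_verts ((n1 + n2) # rest) \<Longrightarrow> gg n1 y \<in> cpg_verts (n1 # n2 # rest)"
  by (cases y) (auto simp: cpg_verts_def gg_def nth_Cons split: nat.splits)

lemma fg: "y \<in> cpg_verts ((n1 + n2) # rest) \<Longrightarrow> ff n1 (gg n1 y) = y"
  by (cases y) (auto simp: cpg_verts_def gg_def ff_def)

lemma gf: "x \<in> cpg_verts (n1 # n2 # rest) \<Longrightarrow> gg n1 (ff n1 x) = x"
  by (cases x) (auto simp: cpg_verts_def gg_def ff_def nth_Cons split: nat.splits)

lemma bij_ff: "bij_betw (ff n1) (cpg_verts (n1 # n2 # rest)) (cpg_verts ((n1 + n2) # rest))"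
  by (rule bij_betw_byWitness[where f'="gg n1"]) (auto simp: ff_in gg_in fg gf)

lemma fst_ff: "fst (ff n1 x) = (if fst x < 2 then 0 else fst x - 1)"
  by (auto simp: ff_def)

lemma fst_gg: "fst (gg n1 y) = (if fst y = 0 then (if snd y < n1 then 0 else 1) else fst y + 1)"
  by (auto simp: gg_def)

definition BB :: "(nat \<times> nat) set set" where "BB = {e. \<forall>x\<in>e. fst x < 2}"

lemma edges_image:
  "(\<lambda>e. ff n1 ` e) ` (edges (complete_partite (n1 # n2 # rest)) - BB)
   = edges (complete_partite ((n1 + n2) # rest))"
proof
  show "(\<lambda>e. ff n1 ` e) ` (edges (complete_partite (n1 # n2 # rest)) - BB)
   \<subseteq> edges (complete_partite ((n1 + n2) # rest))"
  proof
    fix e' assume that_e: "e' \<in> (\<lambda>e. ff n1 ` e) ` (edges (complete_partite (n1 # n2 # rest)) - BB)"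
    obtain x y where xy: "x \<in> cpg_verts (n1 # n2 # rest)" "y \<in> cpg_verts (n1 # n2 # rest)"
      "fst x \<noteq> fst y" "\<not> (fst x < 2 \<and> fst y < 2)" "e' = {ff n1 x, ff n1 y}"
    proof -
      from that_e obtain e where e: "e \<in> edges (complete_partite (n1 # n2 # rest))" "e \<notin> BB" "e' = ff n1 ` e"
        by blast
      from e(1) obtain x y where x: "x \<in> cpg_verts (n1 # n2 # rest)" "y \<in> cpg_verts (n1 # n2 # rest)"
        "fst x \<noteq> fst y" "e = {x, y}"
        by (auto simp: complete_partite_def edges_def)
      have "\<not> (fst x < 2 \<and> fst y < 2)" using e(2) x(4) by (auto simp: BB_def)
      then show ?thesis using that x e by auto
    qed
    have "fst (ff n1 x) \<noteq> fst (ff n1 y)" using xy(3,4) by (auto simp: fst_ff)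
    moreover have "ff n1 x \<in> cpg_verts ((n1 + n2) # rest)" "ff n1 y \<in> cpg_verts ((n1 + n2) # rest)"
      using xy ff_in by blast+
    ultimately show "e' \<in> edges (complete_partite ((n1 + n2) # rest))"
      using xy(5) unfolding complete_partite_def edges_def snd_conv by blast
  qed
next
  show "edges (complete_partite ((n1 + n2) # rest)) \<subseteq>
    (\<lambda>e. ff n1 ` e) ` (edges (complete_partite (n1 # n2 # rest)) - BB)"
  proof
    fix e' assume "e' \<in> edges (complete_partite ((n1 + n2) # rest))"
    then obtain a b where ab: "a \<in> cpg_verts ((n1 + n2) # rest)" "b \<in> cpg_verts ((n1 + n2) # rest)"
      "fst a \<noteq> fst b" "e' = {a, b}"
      by (auto simp: complete_partite_def edges_def)
    have 1: "fst (gg n1 a) \<noteq> fst (gg n1 b)" "\<not> (fst (gg n1 a) < 2 \<and> fst (gg n1 b) < 2)"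
      using ab(3) by (auto simp: fst_gg)
    have g2: "gg n1 a \<in> cpg_verts (n1 # n2 # rest)" "gg n1 b \<in> cpg_verts (n1 # n2 # rest)"
      using ab gg_in by blast+
    have "{gg n1 a, gg n1 b} \<in> edges (complete_partite (n1 # n2 # rest))"
      using 1 g2 unfolding complete_partite_def edges_def snd_conv by blast
    moreover have "{gg n1 a, gg n1 b} \<notin> BB" using 1 by (auto simp: BB_def)
    ultimately have "{gg n1 a, gg n1 b} \<in> edges (complete_partite (n1 # n2 # rest)) - BB" by blast
    moreover have "ff n1 ` {gg n1 a, gg n1 b} = e'" using ab fg by auto
    ultimately show "e' \<in> (\<lambda>e. ff n1 ` e) ` (edges (complete_partite (n1 # n2 # rest)) - BB)"
      by blast
  qed
qed


theorem lemma5: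
  fixes n1 n2 :: nat and rest :: "nat list"
  assumes "n1 \<ge> 1" and "n2 \<ge> 1" and "\<forall>n \<in> set rest. n \<ge> 1"
  shows "is_minor (complete_partite ((n1 + n2) # rest)) (complete_partite (n1 # n2 # rest))
    \<and> (\<forall>k F. F \<subseteq> edges (complete_partite (n1 # n2 # rest)) \<and> card F = k \<longrightarrow>
          (\<exists>F'. F' \<subseteq> edges (complete_partite ((n1 + n2) # rest))
              \<and> card F' = min k (card (edges (complete_partite ((n1 + n2) # rest))))
              \<and> is_minor (remove_edges (complete_partite ((n1 + n2) # rest)) F')
                         (remove_edges (complete_partite (n1 # n2 # rest)) F)))"
proof -
  define V where "V = cpg_verts (n1 # n2 # rest)"
  define W where "W = cpg_verts ((n1 + n2) # rest)"
  define EG where "EG = edges (complete_partite (n1 # n2 # rest))"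
  define EH where "EH = edges (complete_partite ((n1 + n2) # rest))"
  have G: "complete_partite (n1 # n2 # rest) = (V, EG)"
    by (simp add: V_def EG_def complete_partite_def edges_def)
  have H: "complete_partite ((n1 + n2) # rest) = (W, EH)"
    by (simp add: W_def EH_def complete_partite_def edges_def)
  have img: "(\<lambda>e. ff n1 ` e) ` (EG - BB) = EH"
    using edges_image unfolding EG_def EH_def by blast
  have bij: "bij_betw (ff n1) V W" using bij_ff unfolding V_def W_def by blast
  have fEG: "finite EG" unfolding EG_def by (rule finite_edges_cp)
  have fEH: "finite EH" unfolding EH_def by (rule finite_edges_cp)
  have part1: "is_minor (W, EH) (V, EG)"
  proof -
    have "minor_step\<^sup>*\<^sup>* (V, EG) (V, EG - (EG \<inter> BB))"
      by (rule del_edges) (use fEG in simp)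
    moreover have "EG - (EG \<inter> BB) = EG - BB" by blast
    moreover have "graph_iso (V, EG - BB) (W, EH)"
      using iso_image[OF bij, of "EG - BB"] img by simp
    ultimately show ?thesis unfolding is_minor_def by auto
  qed
  have part2: "\<exists>F'. F' \<subseteq> EH \<and> card F' = min k (card EH)
      \<and> is_minor (W, EH - F') (V, EG - F)" if F: "F \<subseteq> EG" "card F = k" for F k
  proof -
    define F0 where "F0 = (\<lambda>e. ff n1 ` e) ` (F - BB)"
    have F0EH: "F0 \<subseteq> EH" using F img unfolding F0_def by blast
    have "card F0 \<le> card (F - BB)" unfolding F0_def
      by (rule card_image_le) (use F fEG finite_subset in blast)
    also have "\<dots> \<le> card F" by (rule card_mono) (use F fEG finite_subset in auto)
    finally have cF0: "card F0 \<le> k" using F by simp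
    have "card F0 \<le> card EH" using F0EH fEH card_mono by blast
    then obtain F' where F': "F0 \<subseteq> F'" "F' \<subseteq> EH" "card F' = min k (card EH)"
      using extend_subset[OF fEH F0EH, of "min k (card EH)"] cF0 by auto
    define P where "P = {e \<in> EG - BB. ff n1 ` e \<in> F'}"
    have "minor_step\<^sup>*\<^sup>* (V, EG - F) (V, EG - F - ((EG \<inter> BB) \<union> P))"
      by (rule del_edges) (use fEG in \<open>auto simp: P_def\<close>)
    moreover have "EG - F - ((EG \<inter> BB) \<union> P) = EG - BB - P"
      using F F'(1) unfolding P_def F0_def by blast
    moreover have "(\<lambda>e. ff n1 ` e) ` (EG - BB - P) = EH - F'"
      using img unfolding P_def by blast
    ultimately have "is_minor (W, EH - F') (V, EG - F)"
      using iso_image[OF bij, of "EG - BB - P"] unfolding is_minor_def by auto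
    then show ?thesis using F' by blast
  qed
  show ?thesis
    unfolding G H remove_edges_def verts_def edges_def fst_conv snd_conv
    using part1 part2 unfolding EH_def[symmetric] EG_def[symmetric]
    by (simp add: G H edges_def)
qed

end
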